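(* Let $(\mathscr{C},\otimes,I)$ be a monoidal category with finite limits and countable colimits such that for every object $C$ the functors $-\otimes C$ and $C\otimes-$ preserve reflexive coequalizers and colimits of countable chains. If $q:B\to C$ and $q':B\to C'$ are regular epimorphisms in $\mathscr{C}$, then their cointersection, i.e. the pushout square $r\circ q=r'\circ q'$ with $r:C\to D$, $r':C'\to D$, is preserved by tensoring on either side: for every object $E$, the squares obtained by applying $E\otimes-$ and $-\otimes E$ are again pushouts.
   Context: A regular epimorphism is a morphism which is the coequalizer of some pair of parallel morphisms. A pair of parallel morphisms is reflexive if it has a common section. *)

theory Defs
  imports Main
begin

record ('o,'m) cat =
  Ob  :: "'o set"
  Hom :: "'o \<Rightarrow> 'o \<Rightarrow> 'm set"
  cmp :: "'m \<Rightarrow> 'm \<Rightarrow> 'm"   (* cmp C g f = g \<circ> f *)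
  ide :: "'o \<Rightarrow> 'm"

definition category :: "('o,'m) cat \<Rightarrow> bool" where
  "category C \<longleftrightarrow>
     (\<forall>a b. Hom C a b \<noteq> {} \<longrightarrow> a \<in> Ob C \<and> b \<in> Ob C) \<and>
     (\<forall>a b a' b' f. f \<in> Hom C a b \<and> f \<in> Hom C a' b' \<longrightarrow> a = a' \<and> b = b') \<and>
     (\<forall>a\<in>Ob C. ide C a \<in> Hom C a a) \<and>
     (\<forall>a b c f g. f \<in> Hom C a b \<longrightarrow> g \<in> Hom C b c \<longrightarrow> cmp C g f \<in> Hom C a c) \<and>
     (\<forall>a b f. f \<in> Hom C a b \<longrightarrow> cmp C (ide C b) f = f \<and> cmp C f (ide C a) = f) \<and>
     (\<forall>a b c d f g h. f \<in> Hom C a b \<longrightarrow> g \<in> Hom C b c \<longrightarrow> h \<in> Hom C c d \<longrightarrow>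
        cmp C h (cmp C g f) = cmp C (cmp C h g) f)"

definition iso_in :: "('o,'m) cat \<Rightarrow> 'o \<Rightarrow> 'o \<Rightarrow> 'm \<Rightarrow> bool" where
  "iso_in C a b f \<longleftrightarrow> f \<in> Hom C a b \<and>
     (\<exists>g\<in>Hom C b a. cmp C g f = ide C a \<and> cmp C f g = ide C b)"

record ('o,'m) mon_str =
  tob :: "'o \<Rightarrow> 'o \<Rightarrow> 'o"
  tar :: "'m \<Rightarrow> 'm \<Rightarrow> 'm"
  unt :: 'o
  asc :: "'o \<Rightarrow> 'o \<Rightarrow> 'o \<Rightarrow> 'm"       (* (a\<otimes>b)\<otimes>c \<rightarrow> a\<otimes>(b\<otimes>c) *)
  lu  :: "'o \<Rightarrow> 'm"                    (* I\<otimes>a \<rightarrow> a *)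
  ru  :: "'o \<Rightarrow> 'm"                    (* a\<otimes>I \<rightarrow> a *)

definition monoidal_category :: "('o,'m) cat \<Rightarrow> ('o,'m) mon_str \<Rightarrow> bool" where
  "monoidal_category C M \<longleftrightarrow> category C \<and> unt M \<in> Ob C \<and>
     (\<forall>a\<in>Ob C. \<forall>b\<in>Ob C. tob M a b \<in> Ob C) \<and>
     (\<forall>a b a' b' f g. f \<in> Hom C a b \<longrightarrow> g \<in> Hom C a' b' \<longrightarrow>
        tar M f g \<in> Hom C (tob M a a') (tob M b b')) \<and>
     (\<forall>a\<in>Ob C. \<forall>b\<in>Ob C. tar M (ide C a) (ide C b) = ide C (tob M a b)) \<and>
     (\<forall>a b c a' b' c' f g f' g'. f \<in> Hom C a b \<longrightarrow> g \<in> Hom C b c \<longrightarrow>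
        f' \<in> Hom C a' b' \<longrightarrow> g' \<in> Hom C b' c' \<longrightarrow>
        tar M (cmp C g f) (cmp C g' f') = cmp C (tar M g g') (tar M f f')) \<and>
     (\<forall>a\<in>Ob C. \<forall>b\<in>Ob C. \<forall>c\<in>Ob C.
        iso_in C (tob M (tob M a b) c) (tob M a (tob M b c)) (asc M a b c)) \<and>
     (\<forall>a b c a' b' c' f g h. f \<in> Hom C a a' \<longrightarrow> g \<in> Hom C b b' \<longrightarrow> h \<in> Hom C c c' \<longrightarrow>
        cmp C (asc M a' b' c') (tar M (tar M f g) h) = cmp C (tar M f (tar M g h)) (asc M a b c)) \<and>
     (\<forall>a\<in>Ob C. iso_in C (tob M (unt M) a) a (lu M a)) \<and>
     (\<forall>a b f. f \<in> Hom C a b \<longrightarrow> cmp C (lu M b) (tar M (ide C (unt M)) f) = cmp C f (lu M a)) \<and>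
     (\<forall>a\<in>Ob C. iso_in C (tob M a (unt M)) a (ru M a)) \<and>
     (\<forall>a b f. f \<in> Hom C a b \<longrightarrow> cmp C (ru M b) (tar M f (ide C (unt M))) = cmp C f (ru M a)) \<and>
     (\<forall>a\<in>Ob C. \<forall>b\<in>Ob C. \<forall>c\<in>Ob C. \<forall>d\<in>Ob C.
        cmp C (asc M a b (tob M c d)) (asc M (tob M a b) c d) =
        cmp C (tar M (ide C a) (asc M b c d))
          (cmp C (asc M a (tob M b c) d) (tar M (asc M a b c) (ide C d)))) \<and>
     (\<forall>a\<in>Ob C. \<forall>b\<in>Ob C.
        cmp C (tar M (ide C a) (lu M b)) (asc M a (unt M) b) = tar M (ru M a) (ide C b))"

text \<open>Index categories have objects and arrows in nat; hence they are exactly the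
  (up to isomorphism) countable small categories.\<close>

definition diagram :: "(nat,nat) cat \<Rightarrow> ('o,'m) cat \<Rightarrow> (nat \<Rightarrow> 'o) \<Rightarrow> (nat \<Rightarrow> 'm) \<Rightarrow> bool" where
  "diagram J C Do Dm \<longleftrightarrow> category J \<and>
     (\<forall>j\<in>Ob J. Do j \<in> Ob C) \<and>
     (\<forall>i j u. u \<in> Hom J i j \<longrightarrow> Dm u \<in> Hom C (Do i) (Do j)) \<and>
     (\<forall>j\<in>Ob J. Dm (ide J j) = ide C (Do j)) \<and>
     (\<forall>i j k u v. u \<in> Hom J i j \<longrightarrow> v \<in> Hom J j k \<longrightarrow> Dm (cmp J v u) = cmp C (Dm v) (Dm u))"

definition cone :: "(nat,nat) cat \<Rightarrow> ('o,'m) cat \<Rightarrow> (nat \<Rightarrow> 'o) \<Rightarrow> (nat \<Rightarrow> 'm) \<Rightarrow> 'o \<Rightarrow> (nat \<Rightarrow> 'm) \<Rightarrow> bool" where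
  "cone J C Do Dm x c \<longleftrightarrow> x \<in> Ob C \<and>
     (\<forall>j\<in>Ob J. c j \<in> Hom C x (Do j)) \<and>
     (\<forall>i j u. u \<in> Hom J i j \<longrightarrow> cmp C (Dm u) (c i) = c j)"

definition limit_cone :: "(nat,nat) cat \<Rightarrow> ('o,'m) cat \<Rightarrow> (nat \<Rightarrow> 'o) \<Rightarrow> (nat \<Rightarrow> 'm) \<Rightarrow> 'o \<Rightarrow> (nat \<Rightarrow> 'm) \<Rightarrow> bool" where
  "limit_cone J C Do Dm x c \<longleftrightarrow> cone J C Do Dm x c \<and>
     (\<forall>y d. cone J C Do Dm y d \<longrightarrow>
        (\<exists>!h. h \<in> Hom C y x \<and> (\<forall>j\<in>Ob J. cmp C (c j) h = d j)))"

definition cocone :: "(nat,nat) cat \<Rightarrow> ('o,'m) cat \<Rightarrow> (nat \<Rightarrow> 'o) \<Rightarrow> (nat \<Rightarrow> 'm) \<Rightarrow> 'o \<Rightarrow> (nat \<Rightarrow> 'm) \<Rightarrow> bool" where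
  "cocone J C Do Dm x c \<longleftrightarrow> x \<in> Ob C \<and>
     (\<forall>j\<in>Ob J. c j \<in> Hom C (Do j) x) \<and>
     (\<forall>i j u. u \<in> Hom J i j \<longrightarrow> cmp C (c j) (Dm u) = c i)"

definition colimit_cocone :: "(nat,nat) cat \<Rightarrow> ('o,'m) cat \<Rightarrow> (nat \<Rightarrow> 'o) \<Rightarrow> (nat \<Rightarrow> 'm) \<Rightarrow> 'o \<Rightarrow> (nat \<Rightarrow> 'm) \<Rightarrow> bool" where
  "colimit_cocone J C Do Dm x c \<longleftrightarrow> cocone J C Do Dm x c \<and>
     (\<forall>y d. cocone J C Do Dm y d \<longrightarrow>
        (\<exists>!h. h \<in> Hom C x y \<and> (\<forall>j\<in>Ob J. cmp C h (c j) = d j)))"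

definition has_finite_limits :: "('o,'m) cat \<Rightarrow> bool" where
  "has_finite_limits C \<longleftrightarrow>
     (\<forall>J Do Dm. finite (Ob J) \<and> (\<forall>i j. finite (Hom J i j)) \<and> diagram J C Do Dm \<longrightarrow>
        (\<exists>x c. limit_cone J C Do Dm x c))"

definition has_countable_colimits :: "('o,'m) cat \<Rightarrow> bool" where
  "has_countable_colimits C \<longleftrightarrow>
     (\<forall>J Do Dm. diagram J C Do Dm \<longrightarrow> (\<exists>x c. colimit_cocone J C Do Dm x c))"

definition coequalizer :: "('o,'m) cat \<Rightarrow> 'm \<Rightarrow> 'm \<Rightarrow> 'm \<Rightarrow> bool" where
  "coequalizer C f g q \<longleftrightarrow> (\<exists>a b e. f \<in> Hom C a b \<and> g \<in> Hom C a b \<and> q \<in> Hom C b e \<and>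
     cmp C q f = cmp C q g \<and>
     (\<forall>e' q'. q' \<in> Hom C b e' \<and> cmp C q' f = cmp C q' g \<longrightarrow>
        (\<exists>!h. h \<in> Hom C e e' \<and> cmp C h q = q')))"

definition reflexive_pair :: "('o,'m) cat \<Rightarrow> 'm \<Rightarrow> 'm \<Rightarrow> bool" where
  "reflexive_pair C f g \<longleftrightarrow> (\<exists>a b s. f \<in> Hom C a b \<and> g \<in> Hom C a b \<and> s \<in> Hom C b a \<and>
     cmp C f s = ide C b \<and> cmp C g s = ide C b)"

definition regular_epi :: "('o,'m) cat \<Rightarrow> 'm \<Rightarrow> bool" where
  "regular_epi C q \<longleftrightarrow> (\<exists>f g. coequalizer C f g q)"

definition pushout :: "('o,'m) cat \<Rightarrow> 'm \<Rightarrow> 'm \<Rightarrow> 'm \<Rightarrow> 'm \<Rightarrow> bool" where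
  "pushout C q q' r r' \<longleftrightarrow> (\<exists>b c c' d. q \<in> Hom C b c \<and> q' \<in> Hom C b c' \<and>
     r \<in> Hom C c d \<and> r' \<in> Hom C c' d \<and> cmp C r q = cmp C r' q' \<and>
     (\<forall>d' s s'. s \<in> Hom C c d' \<and> s' \<in> Hom C c' d' \<and> cmp C s q = cmp C s' q' \<longrightarrow>
        (\<exists>!h. h \<in> Hom C d d' \<and> cmp C h r = s \<and> cmp C h r' = s')))"

definition chain :: "('o,'m) cat \<Rightarrow> (nat \<Rightarrow> 'o) \<Rightarrow> (nat \<Rightarrow> 'm) \<Rightarrow> bool" where
  "chain C X x \<longleftrightarrow> (\<forall>n. X n \<in> Ob C \<and> x n \<in> Hom C (X n) (X (Suc n)))"

definition chain_colimit :: "('o,'m) cat \<Rightarrow> (nat \<Rightarrow> 'o) \<Rightarrow> (nat \<Rightarrow> 'm) \<Rightarrow> 'o \<Rightarrow> (nat \<Rightarrow> 'm) \<Rightarrow> bool" where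
  "chain_colimit C X x L c \<longleftrightarrow> L \<in> Ob C \<and>
     (\<forall>n. c n \<in> Hom C (X n) L \<and> cmp C (c (Suc n)) (x n) = c n) \<and>
     (\<forall>L' c'. L' \<in> Ob C \<and> (\<forall>n. c' n \<in> Hom C (X n) L' \<and> cmp C (c' (Suc n)) (x n) = c' n) \<longrightarrow>
        (\<exists>!h. h \<in> Hom C L L' \<and> (\<forall>n. cmp C h (c n) = c' n)))"

definition preserves_reflexive_coequalizers ::
  "('o,'m) cat \<Rightarrow> ('o \<Rightarrow> 'o) \<Rightarrow> ('m \<Rightarrow> 'm) \<Rightarrow> bool" where
  "preserves_reflexive_coequalizers C Fo Fm \<longleftrightarrow>
     (\<forall>f g q. reflexive_pair C f g \<and> coequalizer C f g q \<longrightarrow> coequalizer C (Fm f) (Fm g) (Fm q))"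

definition preserves_chain_colimits ::
  "('o,'m) cat \<Rightarrow> ('o \<Rightarrow> 'o) \<Rightarrow> ('m \<Rightarrow> 'm) \<Rightarrow> bool" where
  "preserves_chain_colimits C Fo Fm \<longleftrightarrow>
     (\<forall>X x L c. chain C X x \<and> chain_colimit C X x L c \<longrightarrow>
        chain_colimit C (Fo \<circ> X) (Fm \<circ> x) (Fo L) (Fm \<circ> c))"

end

theory Submission
  imports Defs
begin

lemma cat_ob: "category C \<Longrightarrow> f \<in> Hom C a b \<Longrightarrow> a \<in> Ob C \<and> b \<in> Ob C"
  unfolding category_def by (metis empty_iff)
lemma cat_uniq: "category C \<Longrightarrow> f \<in> Hom C a b \<Longrightarrow> f \<in> Hom C a' b' \<Longrightarrow> a = a' \<and> b = b'"
  unfolding category_def by metis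
lemma cat_ide: "category C \<Longrightarrow> a \<in> Ob C \<Longrightarrow> ide C a \<in> Hom C a a"
  unfolding category_def by blast
lemma cat_comp: "category C \<Longrightarrow> f \<in> Hom C a b \<Longrightarrow> g \<in> Hom C b c \<Longrightarrow> cmp C g f \<in> Hom C a c"
  unfolding category_def by blast
lemma cat_idl: "category C \<Longrightarrow> f \<in> Hom C a b \<Longrightarrow> cmp C (ide C b) f = f"
  unfolding category_def by blast
lemma cat_idr: "category C \<Longrightarrow> f \<in> Hom C a b \<Longrightarrow> cmp C f (ide C a) = f"
  unfolding category_def by blast
lemma cat_assoc: "category C \<Longrightarrow> f \<in> Hom C a b \<Longrightarrow> g \<in> Hom C b c \<Longrightarrow> h \<in> Hom C c d \<Longrightarrow>
        cmp C h (cmp C g f) = cmp C (cmp C h g) f"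
  unfolding category_def by blast

lemma cat_idid: "category C \<Longrightarrow> a \<in> Ob C \<Longrightarrow> cmp C (ide C a) (ide C a) = ide C a"
  using cat_idl cat_ide by metis

definition J2 :: "(nat,nat) cat" where
  "J2 = \<lparr>Ob = {0,1}, Hom = (\<lambda>i j. if i = j \<and> i \<le> 1 then {i} else {}), cmp = (\<lambda>v u. u), ide = (\<lambda>i. i)\<rparr>"

lemma J2_cat: "category J2"
  unfolding category_def J2_def by (auto split: if_splits)

lemma coprod_exists:
  assumes C: "category C" and colim: "has_countable_colimits C" and A: "A \<in> Ob C" and B: "B \<in> Ob C"
  shows "\<exists>S i0 i1. i0 \<in> Hom C A S \<and> i1 \<in> Hom C B S \<and>
     (\<forall>Z m0 m1. m0 \<in> Hom C A Z \<and> m1 \<in> Hom C B Z \<longrightarrow>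
        (\<exists>!h. h \<in> Hom C S Z \<and> cmp C h i0 = m0 \<and> cmp C h i1 = m1))"
proof -
  define Do where "Do = (\<lambda>n::nat. if n = 0 then A else B)"
  define Dm where "Dm = (\<lambda>n::nat. if n = 0 then ide C A else ide C B)"
  have "diagram J2 C Do Dm"
    unfolding diagram_def using J2_cat A B
    by (auto simp: J2_def Do_def Dm_def cat_ide[OF C] cat_idl[OF C] cat_idid[OF C] split: if_splits)
  then obtain x c where xc: "colimit_cocone J2 C Do Dm x c"
    using colim unfolding has_countable_colimits_def by blast
  have c0: "c 0 \<in> Hom C A x" and c1: "c 1 \<in> Hom C B x"
    using xc unfolding colimit_cocone_def cocone_def by (auto simp: J2_def Do_def)
  show ?thesis
  proof (intro exI conjI allI impI)
    show "c 0 \<in> Hom C A x" "c 1 \<in> Hom C B x" by fact+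
    fix Z m0 m1 assume m: "m0 \<in> Hom C A Z \<and> m1 \<in> Hom C B Z"
    define d where "d = (\<lambda>n::nat. if n = 0 then m0 else m1)"
    have "cocone J2 C Do Dm Z d"
      unfolding cocone_def using m cat_ob[OF C]
      by (auto simp: J2_def Do_def Dm_def d_def cat_idr[OF C] split: if_splits)
    then obtain h where h: "h \<in> Hom C x Z" "\<forall>j\<in>Ob J2. cmp C h (c j) = d j"
      and hu: "\<And>h'. h' \<in> Hom C x Z \<and> (\<forall>j\<in>Ob J2. cmp C h' (c j) = d j) \<Longrightarrow> h' = h"
      using xc unfolding colimit_cocone_def by metis
    show "\<exists>!h. h \<in> Hom C x Z \<and> cmp C h (c 0) = m0 \<and> cmp C h (c 1) = m1"
    proof (rule ex1I[of _ h])
      show "h \<in> Hom C x Z \<and> cmp C h (c 0) = m0 \<and> cmp C h (c 1) = m1"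
        using h by (auto simp: J2_def d_def)
      fix h' assume "h' \<in> Hom C x Z \<and> cmp C h' (c 0) = m0 \<and> cmp C h' (c 1) = m1"
      then show "h' = h" by (intro hu) (auto simp: J2_def d_def)
    qed
  qed
qed

definition J3 :: "(nat,nat) cat" where
  "J3 = \<lparr>Ob = {0,1,2}, Hom = (\<lambda>i j. {k. (k = i \<and> i = j \<and> i \<le> 2) \<or> (k = 3 \<and> i = 0 \<and> j = 1) \<or> (k = 4 \<and> i = 0 \<and> j = 2)}),
     cmp = (\<lambda>v u. if v \<le> 2 then u else v), ide = (\<lambda>i. i)\<rparr>"

lemma J3_cat: "category J3"
  unfolding category_def J3_def by auto

lemma pushout_exists:
  assumes C: "category C" and colim: "has_countable_colimits C" and a: "a \<in> Hom C O0 X" and b: "b \<in> Hom C O0 Y"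
  shows "\<exists>P i1 i2. i1 \<in> Hom C X P \<and> i2 \<in> Hom C Y P \<and> cmp C i1 a = cmp C i2 b \<and>
     (\<forall>Z m1 m2. m1 \<in> Hom C X Z \<and> m2 \<in> Hom C Y Z \<and> cmp C m1 a = cmp C m2 b \<longrightarrow>
        (\<exists>!h. h \<in> Hom C P Z \<and> cmp C h i1 = m1 \<and> cmp C h i2 = m2))"
proof -
  have O: "O0 \<in> Ob C" and X: "X \<in> Ob C" and Y: "Y \<in> Ob C" using cat_ob[OF C] a b by blast+
  define Do where "Do = (\<lambda>n::nat. if n = 0 then O0 else if n = 1 then X else Y)"
  define Dm where "Dm = (\<lambda>n::nat. if n = 3 then a else if n = 4 then b else ide C (Do n))"
  have "diagram J3 C Do Dm"
    unfolding diagram_def using J3_cat O X Y a b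
    by (auto simp: J3_def Do_def Dm_def cat_ide[OF C] cat_idl[OF C] cat_idid[OF C] cat_idr[OF C])
  then obtain x c where xc: "colimit_cocone J3 C Do Dm x c"
    using colim unfolding has_countable_colimits_def by blast
  have c1: "c 1 \<in> Hom C X x" and c2: "c 2 \<in> Hom C Y x"
    using xc unfolding colimit_cocone_def cocone_def by (auto simp: J3_def Do_def)
  have e1: "cmp C (c 1) a = c 0" and e2: "cmp C (c 2) b = c 0"
    using xc unfolding colimit_cocone_def cocone_def
    by (auto simp: J3_def Dm_def dest!: spec[of _ 0] spec[of _ 1] spec[of _ 2])
  show ?thesis
  proof (intro exI conjI allI impI)
    show "c 1 \<in> Hom C X x" "c 2 \<in> Hom C Y x" by fact+
    show "cmp C (c 1) a = cmp C (c 2) b" using e1 e2 by simp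
    fix Z m1 m2 assume m: "m1 \<in> Hom C X Z \<and> m2 \<in> Hom C Y Z \<and> cmp C m1 a = cmp C m2 b"
    define d where "d = (\<lambda>n::nat. if n = 0 then cmp C m1 a else if n = 1 then m1 else m2)"
    have ma: "cmp C m1 a \<in> Hom C O0 Z" using cat_comp[OF C a] m by blast
    have mai: "cmp C (cmp C m1 a) (ide C O0) = cmp C m1 a" using cat_idr[OF C ma] .
    have "cocone J3 C Do Dm Z d"
      unfolding cocone_def using m cat_ob[OF C] ma mai
      by (auto simp: J3_def Do_def Dm_def d_def cat_idr[OF C])
    then obtain h where h: "h \<in> Hom C x Z" "\<forall>j\<in>Ob J3. cmp C h (c j) = d j"
      and hu: "\<And>h'. h' \<in> Hom C x Z \<and> (\<forall>j\<in>Ob J3. cmp C h' (c j) = d j) \<Longrightarrow> h' = h"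
      using xc unfolding colimit_cocone_def by metis
    show "\<exists>!h. h \<in> Hom C x Z \<and> cmp C h (c 1) = m1 \<and> cmp C h (c 2) = m2"
    proof (rule ex1I[of _ h])
      show "h \<in> Hom C x Z \<and> cmp C h (c 1) = m1 \<and> cmp C h (c 2) = m2"
        using h by (auto simp: J3_def d_def)
      fix h' assume h': "h' \<in> Hom C x Z \<and> cmp C h' (c 1) = m1 \<and> cmp C h' (c 2) = m2"
      have "cmp C h' (c 0) = cmp C m1 a"
        using h' e1 cat_assoc[OF C a c1, of h' Z] by simp
      then show "h' = h" using h' by (intro hu) (auto simp: J3_def d_def)
    qed
  qed
qed


definition coeq_at :: "('o,'m) cat \<Rightarrow> 'm \<Rightarrow> 'm \<Rightarrow> 'm \<Rightarrow> 'o \<Rightarrow> 'o \<Rightarrow> 'o \<Rightarrow> bool" where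
  "coeq_at C f g q K X Q \<longleftrightarrow> f \<in> Hom C K X \<and> g \<in> Hom C K X \<and> q \<in> Hom C X Q \<and>
     cmp C q f = cmp C q g \<and>
     (\<forall>Y q'. q' \<in> Hom C X Y \<and> cmp C q' f = cmp C q' g \<longrightarrow> (\<exists>!h. h \<in> Hom C Q Y \<and> cmp C h q = q'))"

lemma coequalizer_iff: "coequalizer C f g q \<longleftrightarrow> (\<exists>K X Q. coeq_at C f g q K X Q)"
  unfolding coequalizer_def coeq_at_def by blast

lemma coeq_univ: "coeq_at C f g q K X Q \<Longrightarrow> q' \<in> Hom C X Y \<Longrightarrow> cmp C q' f = cmp C q' g \<Longrightarrow>
   \<exists>!h. h \<in> Hom C Q Y \<and> cmp C h q = q'"
  unfolding coeq_at_def by blast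

lemma ex1_eq: "\<exists>!x. P x \<Longrightarrow> P a \<Longrightarrow> P b \<Longrightarrow> a = b"
  by blast

lemma coeq_epi:
  assumes C: "category C" and cq: "coeq_at C f g q K X Q" and x: "x \<in> Hom C Q Y" and y: "y \<in> Hom C Q Y"
    and e: "cmp C x q = cmp C y q"
  shows "x = y"
proof -
  have f: "f \<in> Hom C K X" and g: "g \<in> Hom C K X" and q: "q \<in> Hom C X Q" and qfg: "cmp C q f = cmp C q g"
    using cq unfolding coeq_at_def by auto
  have xq: "cmp C x q \<in> Hom C X Y" using cat_comp[OF C q x] .
  have "cmp C (cmp C x q) f = cmp C (cmp C x q) g"
    using cat_assoc[OF C f q x] cat_assoc[OF C g q x] qfg by simp
  then have "\<exists>!h. h \<in> Hom C Q Y \<and> cmp C h q = cmp C x q" by (rule coeq_univ[OF cq xq])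
  then show ?thesis by (rule ex1_eq) (use x y e in auto)
qed

lemma ex1_obtain: "\<exists>!x. P x \<Longrightarrow> (\<And>x. P x \<Longrightarrow> (\<And>y. P y \<Longrightarrow> y = x) \<Longrightarrow> thesis) \<Longrightarrow> thesis"
  by blast

lemma regular_reflexive:
  assumes C: "category C" and colim: "has_countable_colimits C" and rq: "regular_epi C q"
    and q: "q \<in> Hom C X Q"
  shows "\<exists>K k1 k2 s. coeq_at C k1 k2 q K X Q \<and> s \<in> Hom C X K \<and> cmp C k1 s = ide C X \<and> cmp C k2 s = ide C X"
proof -
  obtain f g K0 X0 Q0 where cq0: "coeq_at C f g q K0 X0 Q0"
    using rq unfolding regular_epi_def coequalizer_iff by blast
  have "q \<in> Hom C X0 Q0" using cq0 unfolding coeq_at_def by blast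
  then have "X0 = X" "Q0 = Q" using cat_uniq[OF C q] by auto
  with cq0 have cq: "coeq_at C f g q K0 X Q" by simp
  have f: "f \<in> Hom C K0 X" and g: "g \<in> Hom C K0 X" and qfg: "cmp C q f = cmp C q g"
    using cq unfolding coeq_at_def by auto
  have K0: "K0 \<in> Ob C" and Xo: "X \<in> Ob C" using cat_ob[OF C f] by auto
  have iX: "ide C X \<in> Hom C X X" using cat_ide[OF C Xo] .
  obtain S i0 i1 where i0: "i0 \<in> Hom C K0 S" and i1: "i1 \<in> Hom C X S"
    and SU: "\<And>Z m0 m1. m0 \<in> Hom C K0 Z \<Longrightarrow> m1 \<in> Hom C X Z \<Longrightarrow>
        (\<exists>!h. h \<in> Hom C S Z \<and> cmp C h i0 = m0 \<and> cmp C h i1 = m1)"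
    using coprod_exists[OF C colim K0 Xo] by metis
  obtain k1 where k1: "k1 \<in> Hom C S X" "cmp C k1 i0 = f" "cmp C k1 i1 = ide C X"
    using SU[OF f iX] by blast
  obtain k2 where k2: "k2 \<in> Hom C S X" "cmp C k2 i0 = g" "cmp C k2 i1 = ide C X"
    using SU[OF g iX] by blast
  have qf: "cmp C q f \<in> Hom C K0 Q" using cat_comp[OF C f q] .
  have "cmp C q k1 = cmp C q k2"
  proof -
    have "\<exists>!h. h \<in> Hom C S Q \<and> cmp C h i0 = cmp C q f \<and> cmp C h i1 = q" using SU[OF qf q] .
    moreover have "cmp C q k1 \<in> Hom C S Q \<and> cmp C (cmp C q k1) i0 = cmp C q f \<and> cmp C (cmp C q k1) i1 = q"
      using cat_comp[OF C k1(1) q] cat_assoc[OF C i0 k1(1) q] cat_assoc[OF C i1 k1(1) q] k1 cat_idr[OF C q] by simp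
    moreover have "cmp C q k2 \<in> Hom C S Q \<and> cmp C (cmp C q k2) i0 = cmp C q f \<and> cmp C (cmp C q k2) i1 = q"
      using cat_comp[OF C k2(1) q] cat_assoc[OF C i0 k2(1) q] cat_assoc[OF C i1 k2(1) q] k2 cat_idr[OF C q] qfg by simp
    ultimately show ?thesis by (rule ex1_eq)
  qed
  have "coeq_at C k1 k2 q S X Q"
    unfolding coeq_at_def
  proof (intro conjI allI impI)
    show "k1 \<in> Hom C S X" "k2 \<in> Hom C S X" "q \<in> Hom C X Q" by fact+
    show "cmp C q k1 = cmp C q k2" by fact
    fix Y q' assume a: "q' \<in> Hom C X Y \<and> cmp C q' k1 = cmp C q' k2"
    then have "cmp C (cmp C q' k1) i0 = cmp C (cmp C q' k2) i0" by simp
    then have "cmp C q' f = cmp C q' g"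
      using cat_assoc[OF C i0 k1(1), of q' Y] cat_assoc[OF C i0 k2(1), of q' Y] a k1 k2 by simp
    then show "\<exists>!h. h \<in> Hom C Q Y \<and> cmp C h q = q'" using coeq_univ[OF cq] a by simp
  qed
  then show ?thesis using i1 k1 k2 by (intro exI[of _ S] exI[of _ k1] exI[of _ k2] exI[of _ i1]) simp
qed


lemma F_coeq:
  assumes C: "category C"
    and Fhom: "\<And>a b f. f \<in> Hom C a b \<Longrightarrow> Fm f \<in> Hom C (Fo a) (Fo b)"
    and Fpres: "\<And>f g q. reflexive_pair C f g \<Longrightarrow> coequalizer C f g q \<Longrightarrow> coequalizer C (Fm f) (Fm g) (Fm q)"
    and cq: "coeq_at C f g e K X Q" and s: "s \<in> Hom C X K" and s1: "cmp C f s = ide C X" and s2: "cmp C g s = ide C X"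
  shows "coeq_at C (Fm f) (Fm g) (Fm e) (Fo K) (Fo X) (Fo Q)"
proof -
  have f: "f \<in> Hom C K X" and g: "g \<in> Hom C K X" and e: "e \<in> Hom C X Q" using cq unfolding coeq_at_def by auto
  have "reflexive_pair C f g" unfolding reflexive_pair_def using f g s s1 s2 by blast
  moreover have "coequalizer C f g e" unfolding coequalizer_iff using cq by blast
  ultimately have "coequalizer C (Fm f) (Fm g) (Fm e)" by (rule Fpres)
  then obtain K' X' Q' where c: "coeq_at C (Fm f) (Fm g) (Fm e) K' X' Q'" unfolding coequalizer_iff by blast
  have "Fm e \<in> Hom C X' Q'" "Fm f \<in> Hom C K' X'" using c unfolding coeq_at_def by auto
  then have "X' = Fo X" "Q' = Fo Q" "K' = Fo K" using cat_uniq[OF C] Fhom[OF e] Fhom[OF f] by metis+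
  with c show ?thesis by simp
qed

lemma main_F:
  assumes C: "category C" and colim: "has_countable_colimits C"
    and Fhom: "\<And>a b f. f \<in> Hom C a b \<Longrightarrow> Fm f \<in> Hom C (Fo a) (Fo b)"
    and Fcmp: "\<And>a b c f g. f \<in> Hom C a b \<Longrightarrow> g \<in> Hom C b c \<Longrightarrow> Fm (cmp C g f) = cmp C (Fm g) (Fm f)"
    and Fpres: "\<And>f g q. reflexive_pair C f g \<Longrightarrow> coequalizer C f g q \<Longrightarrow> coequalizer C (Fm f) (Fm g) (Fm q)"
    and q: "q \<in> Hom C B C1" and q': "q' \<in> Hom C B C2"
    and rq: "regular_epi C q" and rq': "regular_epi C q'"
    and r: "r \<in> Hom C C1 D" and r': "r' \<in> Hom C C2 D"
    and po: "pushout C q q' r r'"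
  shows "pushout C (Fm q) (Fm q') (Fm r) (Fm r')"
proof -
  note comp = cat_comp[OF C] and assoc = cat_assoc[OF C] and idl = cat_idl[OF C] and idr = cat_idr[OF C]
  obtain b c c' d where po1: "q \<in> Hom C b c" "q' \<in> Hom C b c'" "r \<in> Hom C c d" "r' \<in> Hom C c' d"
    and rqe: "cmp C r q = cmp C r' q'"
    and poU0: "\<forall>d' s s'. s \<in> Hom C c d' \<and> s' \<in> Hom C c' d' \<and> cmp C s q = cmp C s' q' \<longrightarrow>
        (\<exists>!h. h \<in> Hom C d d' \<and> cmp C h r = s \<and> cmp C h r' = s')"
    using po unfolding pushout_def by blast
  have "c = C1" "c' = C2" "d = D" using cat_uniq[OF C] po1 q q' r r' by metis+
  then have poU: "\<And>d' s s'. s \<in> Hom C C1 d' \<Longrightarrow> s' \<in> Hom C C2 d' \<Longrightarrow> cmp C s q = cmp C s' q' \<Longrightarrow>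
        (\<exists>!h. h \<in> Hom C D d' \<and> cmp C h r = s \<and> cmp C h r' = s')" using poU0 by blast
  obtain K k1 k2 \<sigma> where cq: "coeq_at C k1 k2 q K B C1" and \<sigma>: "\<sigma> \<in> Hom C B K"
    and \<sigma>1: "cmp C k1 \<sigma> = ide C B" and \<sigma>2: "cmp C k2 \<sigma> = ide C B"
    using regular_reflexive[OF C colim rq q] by blast
  obtain K' k1' k2' s' where cq': "coeq_at C k1' k2' q' K' B C2" and s': "s' \<in> Hom C B K'"
    and s1': "cmp C k1' s' = ide C B" and s2': "cmp C k2' s' = ide C B"
    using regular_reflexive[OF C colim rq' q'] by blast
  have k1: "k1 \<in> Hom C K B" and k2: "k2 \<in> Hom C K B" and qk: "cmp C q k1 = cmp C q k2"
    using cq unfolding coeq_at_def by auto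
  have k1': "k1' \<in> Hom C K' B" and k2': "k2' \<in> Hom C K' B" and qk': "cmp C q' k1' = cmp C q' k2'"
    using cq' unfolding coeq_at_def by auto
  have Bo: "B \<in> Ob C" and C1o: "C1 \<in> Ob C" and C2o: "C2 \<in> Ob C" and Do: "D \<in> Ob C"
    using cat_ob[OF C] q q' r by blast+
  have K'o: "K' \<in> Ob C" using cat_ob[OF C s'] by blast
  have iK': "ide C K' \<in> Hom C K' K'" and iC1: "ide C C1 \<in> Hom C C1 C1" using cat_ide[OF C] K'o C1o by blast+
  obtain P p j where p: "p \<in> Hom C K' P" and j: "j \<in> Hom C C1 P" and pj: "cmp C p s' = cmp C j q"
    and PU: "\<And>Z m1 m2. m1 \<in> Hom C K' Z \<Longrightarrow> m2 \<in> Hom C C1 Z \<Longrightarrow> cmp C m1 s' = cmp C m2 q \<Longrightarrow>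
        (\<exists>!h. h \<in> Hom C P Z \<and> cmp C h p = m1 \<and> cmp C h j = m2)"
    using pushout_exists[OF C colim s' q] by metis
  obtain W iw jw where iw: "iw \<in> Hom C K W" and jw: "jw \<in> Hom C K' W" and ij: "cmp C iw \<sigma> = cmp C jw s'"
    and WU: "\<And>Z m1 m2. m1 \<in> Hom C K Z \<Longrightarrow> m2 \<in> Hom C K' Z \<Longrightarrow> cmp C m1 \<sigma> = cmp C m2 s' \<Longrightarrow>
        (\<exists>!h. h \<in> Hom C W Z \<and> cmp C h iw = m1 \<and> cmp C h jw = m2)"
    using pushout_exists[OF C colim \<sigma> s'] by metis
  have sk1: "cmp C s' k1 \<in> Hom C K K'" and sk2: "cmp C s' k2 \<in> Hom C K K'" using comp k1 k2 s' by blast+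
  have "cmp C (cmp C s' k1) \<sigma> = cmp C (ide C K') s'"
    using assoc[OF \<sigma> k1 s'] \<sigma>1 idr[OF s'] idl[OF s'] by simp
  then obtain w1 where w1: "w1 \<in> Hom C W K'" "cmp C w1 iw = cmp C s' k1" "cmp C w1 jw = ide C K'"
    using WU[OF sk1 iK'] by blast
  have "cmp C (cmp C s' k2) \<sigma> = cmp C (ide C K') s'"
    using assoc[OF \<sigma> k2 s'] \<sigma>2 idr[OF s'] idl[OF s'] by simp
  then obtain w2 where w2: "w2 \<in> Hom C W K'" "cmp C w2 iw = cmp C s' k2" "cmp C w2 jw = ide C K'"
    using WU[OF sk2 iK'] by blast
  have cw: "coeq_at C w1 w2 p W K' P"
    unfolding coeq_at_def
  proof (intro conjI allI impI)
    show "w1 \<in> Hom C W K'" "w2 \<in> Hom C W K'" "p \<in> Hom C K' P" using w1 w2 p by auto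
    have psk: "cmp C p (cmp C s' k1) \<in> Hom C K P" using comp[OF sk1 p] .
    have pskeq: "cmp C p (cmp C s' k1) = cmp C p (cmp C s' k2)"
      using assoc[OF k1 s' p] assoc[OF k2 s' p] pj assoc[OF k1 q j] assoc[OF k2 q j] qk by simp
    have c0: "cmp C (cmp C p (cmp C s' k1)) \<sigma> = cmp C p s'"
      using assoc[OF \<sigma> sk1 p] assoc[OF \<sigma> k1 s'] \<sigma>1 idr[OF s'] by simp
    have U: "\<exists>!h. h \<in> Hom C W P \<and> cmp C h iw = cmp C p (cmp C s' k1) \<and> cmp C h jw = p"
      by (rule WU[OF psk p c0])
    show "cmp C p w1 = cmp C p w2"
    proof (rule ex1_eq[OF U])
      show "cmp C p w1 \<in> Hom C W P \<and> cmp C (cmp C p w1) iw = cmp C p (cmp C s' k1) \<and> cmp C (cmp C p w1) jw = p"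
        using comp[OF w1(1) p] assoc[OF iw w1(1) p] assoc[OF jw w1(1) p] w1 idr[OF p] by simp
      show "cmp C p w2 \<in> Hom C W P \<and> cmp C (cmp C p w2) iw = cmp C p (cmp C s' k1) \<and> cmp C (cmp C p w2) jw = p"
        using comp[OF w2(1) p] assoc[OF iw w2(1) p] assoc[OF jw w2(1) p] w2 idr[OF p] pskeq by simp
    qed
    fix Y h assume a: "h \<in> Hom C K' Y \<and> cmp C h w1 = cmp C h w2"
    then have h: "h \<in> Hom C K' Y" by simp
    have "cmp C (cmp C h w1) iw = cmp C (cmp C h w2) iw" using a by simp
    then have "cmp C h (cmp C s' k1) = cmp C h (cmp C s' k2)"
      using assoc[OF iw w1(1) h] assoc[OF iw w2(1) h] w1 w2 by simp
    then have hs: "cmp C (cmp C h s') k1 = cmp C (cmp C h s') k2"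
      using assoc[OF k1 s' h] assoc[OF k2 s' h] by simp
    have hs1: "cmp C h s' \<in> Hom C B Y" using comp[OF s' h] .
    obtain g where g: "g \<in> Hom C C1 Y" "cmp C g q = cmp C h s'"
      and gu: "\<And>g'. g' \<in> Hom C C1 Y \<and> cmp C g' q = cmp C h s' \<Longrightarrow> g' = g"
      using coeq_univ[OF cq hs1 hs] by (rule ex1_obtain) blast
    obtain m where m: "m \<in> Hom C P Y" "cmp C m p = h" "cmp C m j = g"
      and mu: "\<And>m'. m' \<in> Hom C P Y \<and> cmp C m' p = h \<and> cmp C m' j = g \<Longrightarrow> m' = m"
      using PU[OF h g(1) g(2)[symmetric]] by (rule ex1_obtain) blast
    show "\<exists>!m. m \<in> Hom C P Y \<and> cmp C m p = h"
    proof (rule ex1I[of _ m])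
      show "m \<in> Hom C P Y \<and> cmp C m p = h" using m by simp
      fix m' assume m': "m' \<in> Hom C P Y \<and> cmp C m' p = h"
      have "cmp C m' j \<in> Hom C C1 Y" using comp[OF j] m' by blast
      moreover have "cmp C (cmp C m' j) q = cmp C h s'"
        using assoc[OF q j, of m' Y] assoc[OF s' p, of m' Y] m' pj by simp
      ultimately have "cmp C m' j = g" using gu by blast
      then show "m' = m" using mu m' by blast
    qed
  qed
  have jw1: "cmp C w1 jw = ide C K'" "cmp C w2 jw = ide C K'" using w1 w2 by auto
  have qk1': "cmp C q k1' \<in> Hom C K' C1" and qk2': "cmp C q k2' \<in> Hom C K' C1" using comp k1' k2' q by blast+
  have "cmp C (cmp C q k1') s' = cmp C (ide C C1) q"
    using assoc[OF s' k1' q] s1' idr[OF q] idl[OF q] by simp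
  then obtain u1 where u1: "u1 \<in> Hom C P C1" "cmp C u1 p = cmp C q k1'" "cmp C u1 j = ide C C1"
    using PU[OF qk1' iC1] by blast
  have "cmp C (cmp C q k2') s' = cmp C (ide C C1) q"
    using assoc[OF s' k2' q] s2' idr[OF q] idl[OF q] by simp
  then obtain u2 where u2: "u2 \<in> Hom C P C1" "cmp C u2 p = cmp C q k2'" "cmp C u2 j = ide C C1"
    using PU[OF qk2' iC1] by blast
  have cu: "coeq_at C u1 u2 r P C1 D"
    unfolding coeq_at_def
  proof (intro conjI allI impI)
    show "u1 \<in> Hom C P C1" "u2 \<in> Hom C P C1" "r \<in> Hom C C1 D" using u1 u2 r by auto
    have rq1: "cmp C r (cmp C q k1') \<in> Hom C K' D" using comp[OF qk1' r] .
    have rqeq: "cmp C r (cmp C q k1') = cmp C r (cmp C q k2')"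
      using assoc[OF k1' q r] assoc[OF k2' q r] rqe assoc[OF k1' q' r'] assoc[OF k2' q' r'] qk' by simp
    have c0: "cmp C (cmp C r (cmp C q k1')) s' = cmp C r q"
      using assoc[OF s' qk1' r] assoc[OF s' k1' q] s1' idr[OF q] by simp
    have U: "\<exists>!h. h \<in> Hom C P D \<and> cmp C h p = cmp C r (cmp C q k1') \<and> cmp C h j = r"
      by (rule PU[OF rq1 r c0])
    show "cmp C r u1 = cmp C r u2"
    proof (rule ex1_eq[OF U])
      show "cmp C r u1 \<in> Hom C P D \<and> cmp C (cmp C r u1) p = cmp C r (cmp C q k1') \<and> cmp C (cmp C r u1) j = r"
        using comp[OF u1(1) r] assoc[OF p u1(1) r] assoc[OF j u1(1) r] u1 idr[OF r] by simp
      show "cmp C r u2 \<in> Hom C P D \<and> cmp C (cmp C r u2) p = cmp C r (cmp C q k1') \<and> cmp C (cmp C r u2) j = r"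
        using comp[OF u2(1) r] assoc[OF p u2(1) r] assoc[OF j u2(1) r] u2 idr[OF r] rqeq by simp
    qed
    fix Y g assume a: "g \<in> Hom C C1 Y \<and> cmp C g u1 = cmp C g u2"
    then have g: "g \<in> Hom C C1 Y" by simp
    have "cmp C (cmp C g u1) p = cmp C (cmp C g u2) p" using a by simp
    then have "cmp C g (cmp C q k1') = cmp C g (cmp C q k2')"
      using assoc[OF p u1(1) g] assoc[OF p u2(1) g] u1 u2 by simp
    then have gq: "cmp C (cmp C g q) k1' = cmp C (cmp C g q) k2'"
      using assoc[OF k1' q g] assoc[OF k2' q g] by simp
    have gq1: "cmp C g q \<in> Hom C B Y" using comp[OF q g] .
    obtain g' where g': "g' \<in> Hom C C2 Y" "cmp C g' q' = cmp C g q"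
      and gu: "\<And>g''. g'' \<in> Hom C C2 Y \<and> cmp C g'' q' = cmp C g q \<Longrightarrow> g'' = g'"
      using coeq_univ[OF cq' gq1 gq] by (rule ex1_obtain) blast
    obtain m where m: "m \<in> Hom C D Y" "cmp C m r = g" "cmp C m r' = g'"
      and mu: "\<And>m'. m' \<in> Hom C D Y \<and> cmp C m' r = g \<and> cmp C m' r' = g' \<Longrightarrow> m' = m"
      using poU[OF g g'(1) g'(2)[symmetric]] by (rule ex1_obtain) blast
    show "\<exists>!m. m \<in> Hom C D Y \<and> cmp C m r = g"
    proof (rule ex1I[of _ m])
      show "m \<in> Hom C D Y \<and> cmp C m r = g" using m by simp
      fix m' assume m': "m' \<in> Hom C D Y \<and> cmp C m' r = g"
      have "cmp C m' r' \<in> Hom C C2 Y" using comp[OF r'] m' by blast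
      moreover have "cmp C (cmp C m' r') q' = cmp C g q"
        using assoc[OF q' r', of m' Y] assoc[OF q r, of m' Y] m' rqe by simp
      ultimately have "cmp C m' r' = g'" using gu by blast
      then show "m' = m" using mu m' by blast
    qed
  qed
  have Fcw: "coeq_at C (Fm w1) (Fm w2) (Fm p) (Fo W) (Fo K') (Fo P)"
    by (rule F_coeq[OF C Fhom Fpres cw jw jw1])
  have Fcu: "coeq_at C (Fm u1) (Fm u2) (Fm r) (Fo P) (Fo C1) (Fo D)"
    by (rule F_coeq[OF C Fhom Fpres cu j u1(3) u2(3)])
  have Fcq': "coeq_at C (Fm k1') (Fm k2') (Fm q') (Fo K') (Fo B) (Fo C2)"
    by (rule F_coeq[OF C Fhom Fpres cq' s' s1' s2'])
  have Fq: "Fm q \<in> Hom C (Fo B) (Fo C1)" and Fq': "Fm q' \<in> Hom C (Fo B) (Fo C2)"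
    and Fr: "Fm r \<in> Hom C (Fo C1) (Fo D)" and Fr': "Fm r' \<in> Hom C (Fo C2) (Fo D)"
    and Fp: "Fm p \<in> Hom C (Fo K') (Fo P)" and Fu1: "Fm u1 \<in> Hom C (Fo P) (Fo C1)"
    and Fu2: "Fm u2 \<in> Hom C (Fo P) (Fo C1)" and Fk1': "Fm k1' \<in> Hom C (Fo K') (Fo B)"
    and Fk2': "Fm k2' \<in> Hom C (Fo K') (Fo B)"
    using Fhom q q' r r' p u1(1) u2(1) k1' k2' by auto
  have Fcomm: "cmp C (Fm r) (Fm q) = cmp C (Fm r') (Fm q')"
    using Fcmp[OF q r] Fcmp[OF q' r'] rqe by simp
  show ?thesis
    unfolding pushout_def
  proof (intro exI conjI allI impI)
    show "Fm q \<in> Hom C (Fo B) (Fo C1)" "Fm q' \<in> Hom C (Fo B) (Fo C2)"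
      "Fm r \<in> Hom C (Fo C1) (Fo D)" "Fm r' \<in> Hom C (Fo C2) (Fo D)" by fact+
    show "cmp C (Fm r) (Fm q) = cmp C (Fm r') (Fm q')" by fact
    fix d' t t' assume a: "t \<in> Hom C (Fo C1) d' \<and> t' \<in> Hom C (Fo C2) d' \<and> cmp C t (Fm q) = cmp C t' (Fm q')"
    then have t: "t \<in> Hom C (Fo C1) d'" and t': "t' \<in> Hom C (Fo C2) d'"
      and tt: "cmp C t (Fm q) = cmp C t' (Fm q')" by auto
    have e1: "cmp C (cmp C t (Fm u1)) (Fm p) = cmp C t' (Fm (cmp C q' k1'))"
    proof -
      have "cmp C (cmp C t (Fm u1)) (Fm p) = cmp C t (Fm (cmp C u1 p))"
        using assoc[OF Fp Fu1 t] Fcmp[OF p u1(1)] by simp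
      also have "\<dots> = cmp C t (cmp C (Fm q) (Fm k1'))" using u1(2) Fcmp[OF k1' q] by simp
      also have "\<dots> = cmp C t' (cmp C (Fm q') (Fm k1'))" using assoc[OF Fk1' Fq t] assoc[OF Fk1' Fq' t'] tt by simp
      also have "\<dots> = cmp C t' (Fm (cmp C q' k1'))" using Fcmp[OF k1' q'] by simp
      finally show ?thesis .
    qed
    have e2: "cmp C (cmp C t (Fm u2)) (Fm p) = cmp C t' (Fm (cmp C q' k2'))"
    proof -
      have "cmp C (cmp C t (Fm u2)) (Fm p) = cmp C t (Fm (cmp C u2 p))"
        using assoc[OF Fp Fu2 t] Fcmp[OF p u2(1)] by simp
      also have "\<dots> = cmp C t (cmp C (Fm q) (Fm k2'))" using u2(2) Fcmp[OF k2' q] by simp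
      also have "\<dots> = cmp C t' (cmp C (Fm q') (Fm k2'))" using assoc[OF Fk2' Fq t] assoc[OF Fk2' Fq' t'] tt by simp
      also have "\<dots> = cmp C t' (Fm (cmp C q' k2'))" using Fcmp[OF k2' q'] by simp
      finally show ?thesis .
    qed
    have tu: "cmp C t (Fm u1) = cmp C t (Fm u2)"
      by (rule coeq_epi[OF C Fcw comp[OF Fu1 t] comp[OF Fu2 t]]) (use e1 e2 qk' in simp)
    obtain h where h: "h \<in> Hom C (Fo D) d'" "cmp C h (Fm r) = t"
      and hu: "\<And>h'. h' \<in> Hom C (Fo D) d' \<and> cmp C h' (Fm r) = t \<Longrightarrow> h' = h"
      using coeq_univ[OF Fcu t tu] by (rule ex1_obtain) blast
    have hr': "cmp C h (Fm r') = t'"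
    proof (rule coeq_epi[OF C Fcq' comp[OF Fr' h(1)] t'])
      show "cmp C (cmp C h (Fm r')) (Fm q') = cmp C t' (Fm q')"
        using assoc[OF Fq' Fr' h(1)] assoc[OF Fq Fr h(1)] Fcomm h(2) tt by simp
    qed
    show "\<exists>!h. h \<in> Hom C (Fo D) d' \<and> cmp C h (Fm r) = t \<and> cmp C h (Fm r') = t'"
      using h hr' hu by blast
  qed
qed

lemma mon_tarH: "monoidal_category C M \<Longrightarrow> f \<in> Hom C a b \<Longrightarrow> g \<in> Hom C a' b' \<Longrightarrow>
        tar M f g \<in> Hom C (tob M a a') (tob M b b')"
  unfolding monoidal_category_def by (elim conjE) blast

lemma mon_tarC: "monoidal_category C M \<Longrightarrow> f \<in> Hom C a b \<Longrightarrow> g \<in> Hom C b c \<Longrightarrow>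
        f' \<in> Hom C a' b' \<Longrightarrow> g' \<in> Hom C b' c' \<Longrightarrow>
        tar M (cmp C g f) (cmp C g' f') = cmp C (tar M g g') (tar M f f')"
  unfolding monoidal_category_def by (elim conjE) blast

theorem lemma1:
  fixes C :: "('o,'m) cat" and M :: "('o,'m) mon_str"
  assumes mon: "monoidal_category C M"
    and lim: "has_finite_limits C"
    and colim: "has_countable_colimits C"
    and pres_r: "\<forall>Y\<in>Ob C.
        preserves_reflexive_coequalizers C (\<lambda>a. tob M a Y) (\<lambda>f. tar M f (ide C Y)) \<and>
        preserves_chain_colimits C (\<lambda>a. tob M a Y) (\<lambda>f. tar M f (ide C Y))"
    and pres_l: "\<forall>Y\<in>Ob C.
        preserves_reflexive_coequalizers C (\<lambda>a. tob M Y a) (\<lambda>f. tar M (ide C Y) f) \<and>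
        preserves_chain_colimits C (\<lambda>a. tob M Y a) (\<lambda>f. tar M (ide C Y) f)"
    and q: "q \<in> Hom C B C1" and q': "q' \<in> Hom C B C2"
    and rq: "regular_epi C q" and rq': "regular_epi C q'"
    and r: "r \<in> Hom C C1 D" and r': "r' \<in> Hom C C2 D"
    and po: "pushout C q q' r r'"
    and E: "E \<in> Ob C"
  shows "pushout C (tar M (ide C E) q) (tar M (ide C E) q') (tar M (ide C E) r) (tar M (ide C E) r') \<and>
         pushout C (tar M q (ide C E)) (tar M q' (ide C E)) (tar M r (ide C E)) (tar M r' (ide C E))"
proof
  have C: "category C" using mon unfolding monoidal_category_def by (elim conjE)
  have tarH: "\<And>a b a' b' f g. f \<in> Hom C a b \<Longrightarrow> g \<in> Hom C a' b' \<Longrightarrow>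
        tar M f g \<in> Hom C (tob M a a') (tob M b b')"
    using mon_tarH[OF mon] by blast
  have tarC: "\<And>a b c a' b' c' f g f' g'. f \<in> Hom C a b \<Longrightarrow> g \<in> Hom C b c \<Longrightarrow>
        f' \<in> Hom C a' b' \<Longrightarrow> g' \<in> Hom C b' c' \<Longrightarrow>
        tar M (cmp C g f) (cmp C g' f') = cmp C (tar M g g') (tar M f f')"
    using mon_tarC[OF mon] by blast
  have iE: "ide C E \<in> Hom C E E" using cat_ide[OF C E] .
  have iiE: "cmp C (ide C E) (ide C E) = ide C E" using cat_idid[OF C E] .
  show "pushout C (tar M (ide C E) q) (tar M (ide C E) q') (tar M (ide C E) r) (tar M (ide C E) r')"
  proof (rule main_F[OF C colim _ _ _ q q' rq rq' r r' po, where Fo = "\<lambda>a. tob M E a"])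
    show "\<And>a b f. f \<in> Hom C a b \<Longrightarrow> tar M (ide C E) f \<in> Hom C (tob M E a) (tob M E b)"
      using tarH[OF iE] by blast
    show "\<And>a b c f g. f \<in> Hom C a b \<Longrightarrow> g \<in> Hom C b c \<Longrightarrow>
        tar M (ide C E) (cmp C g f) = cmp C (tar M (ide C E) g) (tar M (ide C E) f)"
      using tarC[OF iE iE] iiE by metis
    show "\<And>f g q. reflexive_pair C f g \<Longrightarrow> coequalizer C f g q \<Longrightarrow>
        coequalizer C (tar M (ide C E) f) (tar M (ide C E) g) (tar M (ide C E) q)"
      using pres_l E unfolding preserves_reflexive_coequalizers_def by blast
  qed
  show "pushout C (tar M q (ide C E)) (tar M q' (ide C E)) (tar M r (ide C E)) (tar M r' (ide C E))"
  proof (rule main_F[OF C colim _ _ _ q q' rq rq' r r' po, where Fo = "\<lambda>a. tob M a E"])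
    show "\<And>a b f. f \<in> Hom C a b \<Longrightarrow> tar M f (ide C E) \<in> Hom C (tob M a E) (tob M b E)"
      using tarH iE by blast
    show "\<And>a b c f g. f \<in> Hom C a b \<Longrightarrow> g \<in> Hom C b c \<Longrightarrow>
        tar M (cmp C g f) (ide C E) = cmp C (tar M g (ide C E)) (tar M f (ide C E))"
      using tarC iE iiE by metis
    show "\<And>f g q. reflexive_pair C f g \<Longrightarrow> coequalizer C f g q \<Longrightarrow>
        coequalizer C (tar M f (ide C E)) (tar M g (ide C E)) (tar M q (ide C E))"
      using pres_r E unfolding preserves_reflexive_coequalizers_def by blast
  qed
qed

end
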